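(* There is a universal constant $C>0$ with the following property. Let $p\in(0,1)$, $\delta_0\in(0,1)$, let $f:\mathbb{Z}\to[0,\infty)$ with $\|f\|_1=1$, and let $\mathcal A$ be an $(N,n,K,\delta)$-admissible set for some parameters $N$, $\delta\in[\delta_0,1)$, $n\geq 1/\delta_0$ and $K$. Let $\ell$ be an integer with $\delta_0 n<\ell\leq n$. Then, deterministically (for every realization of $X_1,\dots,X_\ell$), $$\sum_{t\in I}f_{\mathcal A,p,\ell}(t)\leq \frac{C}{\sqrt{\delta_0 n\min(p,1-p)}}$$ for any integer interval $I\subset\mathbb{Z}$ with $|I|\leq N$, and $$\sum_{t\in J}f_{\mathcal A,p,\ell}(t)\leq \frac{2C|J|}{\sqrt{\delta_0 n\min(p,1-p)}\,N}$$ for any integer interval $J$ with $|J|\geq N$.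
   Context: For integers $N,n\geq1$ and reals $\delta\in(0,1]$, $K\geq1$, a set $\mathcal A\subset\mathbb{Z}^n$ is $(N,n,K,\delta)$-admissible if: $\mathcal A=A_1\times\dots\times A_n$ with each $A_i$ an origin-symmetric subset of $\mathbb{Z}$; $A_i$ is an integer interval of cardinality at least $2N+1$ for every $i>\delta n$; for every $i\leq\delta n$, $A_i$ is a union of two integer intervals of total cardinality at least $2N$ and $A_i\cap[-N,N]=\emptyset$; $|A_1|\cdots|A_n|\leq (KN)^n$; and $\max A_i<nN$ for all $i$. Given such $\mathcal A$, $p\in(0,1)$ and $f:\mathbb{Z}\to\mathbb{R}$, let $X_1,\dots,X_n$ be independent with $X_i$ uniform on $A_i$, and for $\ell\leq n$ define the random function $f_{\mathcal A,p,\ell}(t)=\sum_{(v_j)\in\{0,1\}^\ell}p^{\sum_j v_j}(1-p)^{\ell-\sum_j v_j} f(t+v_1X_1+\dots+v_\ell X_\ell)$, $t\in\mathbb{Z}$. $\|f\|_1=\sum_{t\in\mathbb{Z}}|f(t)|$. *)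

theory Defs
  imports "HOL-Analysis.Analysis"
begin

text \<open>An integer interval is a set of the form {a..b} (possibly empty).
  The admissible set \<A> = A_1 x ... x A_n is represented by its factors A i, i = 1..n.\<close>

definition int_interval :: "int set \<Rightarrow> bool" where
  "int_interval I \<longleftrightarrow> (\<exists>a b. I = {a..b})"

definition admissible :: "nat \<Rightarrow> nat \<Rightarrow> real \<Rightarrow> real \<Rightarrow> (nat \<Rightarrow> int set) \<Rightarrow> bool" where
  "admissible N n K \<delta> A \<longleftrightarrow>
     N \<ge> 1 \<and> n \<ge> 1 \<and> 0 < \<delta> \<and> \<delta> \<le> 1 \<and> K \<ge> 1 \<and>
     (\<forall>i\<in>{1..n}. \<forall>x. x \<in> A i \<longleftrightarrow> - x \<in> A i) \<and>
     (\<forall>i\<in>{1..n}. real i > \<delta> * real n \<longrightarrow>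
        int_interval (A i) \<and> card (A i) \<ge> 2 * N + 1) \<and>
     (\<forall>i\<in>{1..n}. real i \<le> \<delta> * real n \<longrightarrow>
        (\<exists>I1 I2. int_interval I1 \<and> int_interval I2 \<and> A i = I1 \<union> I2) \<and>
        card (A i) \<ge> 2 * N \<and> A i \<inter> {- int N..int N} = {}) \<and>
     (\<Prod>i=1..n. real (card (A i))) \<le> (K * real N) ^ n \<and>
     (\<forall>i\<in>{1..n}. Max (A i) < int n * int N)"

text \<open>The function f_{A,p,l} for a given realization x of X_1..X_l; the sum over
  v in {0,1}^l is written as a sum over subsets S = {j. v_j = 1} of {1..l}.\<close>

definition frand :: "real \<Rightarrow> nat \<Rightarrow> (int \<Rightarrow> real) \<Rightarrow> (nat \<Rightarrow> int) \<Rightarrow> int \<Rightarrow> real" where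
  "frand p l f x t =
     (\<Sum>S\<in>Pow {1..l}. p ^ card S * (1 - p) ^ (l - card S) * f (t + (\<Sum>j\<in>S. x j)))"

end

theory Submission
  imports Defs
begin


definition my_perms :: "'a set \<Rightarrow> 'a list set" where
  "my_perms A = {xs. set xs = A \<and> distinct xs}"

lemma card_my_perms:
  assumes "finite A" shows "card (my_perms A) = fact (card A)"
proof -
  have "my_perms A = {xs. length xs = card A \<and> distinct xs \<and> set xs \<subseteq> A}"
    unfolding my_perms_def
  proof (intro Collect_cong iffI)
    fix xs assume "set xs = A \<and> distinct xs"
    then show "length xs = card A \<and> distinct xs \<and> set xs \<subseteq> A" by (auto simp: distinct_card)
  next
    fix xs assume a: "length xs = card A \<and> distinct xs \<and> set xs \<subseteq> A"
    then have "card (set xs) = card A" by (simp add: distinct_card)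
    moreover have "set xs \<subseteq> A" using a by simp
    ultimately have "set xs = A" by (intro card_subset_eq[OF assms])
    then show "set xs = A \<and> distinct xs" using a by simp
  qed
  then show ?thesis using card_lists_distinct_length_eq[OF assms, of "card A"]
    by (simp add: fact_prod)
qed


lemma card_filter_sum: "finite A \<Longrightarrow> card {x\<in>A. P x} = (\<Sum>x\<in>A. if P x then 1 else 0)"
  by (simp add: sum.If_cases Int_def conj_commute)

lemma perm_length: "ys \<in> my_perms S \<Longrightarrow> length ys = card S"
proof -
  assume "ys \<in> my_perms S"
  then have "set ys = S" "distinct ys" by (simp_all add: my_perms_def)
  then show ?thesis using distinct_card by metis
qed

lemma perm_prefix_card:
  assumes M: "finite M" and S: "S \<subseteq> M"
  shows "card {xs\<in>my_perms M. set (take (card S) xs) = S}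
         = fact (card S) * fact (card M - card S)"
proof -
  have fS: "finite S" by (rule finite_subset[OF S M])
  let ?f = "\<lambda>(ys,zs). ys @ (zs::'a list)"
  have eq: "{xs\<in>my_perms M. set (take (card S) xs) = S}
      = ?f ` (my_perms S \<times> my_perms (M - S))"
  proof (intro equalityI subsetI)
    fix xs assume xs: "xs \<in> {xs\<in>my_perms M. set (take (card S) xs) = S}"
    then have d: "distinct xs" and sx: "set xs = M" and t: "set (take (card S) xs) = S"
      by (auto simp: my_perms_def)
    have dt: "distinct (take (card S) xs)" "distinct (drop (card S) xs)" using d by auto
    have "set (drop (card S) xs) = M - S"
    proof -
      have "set (take (card S) xs) \<inter> set (drop (card S) xs) = {}"
        using d by (metis append_take_drop_id distinct_append)
      moreover have "set (take (card S) xs) \<union> set (drop (card S) xs) = M"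
        using sx by (metis append_take_drop_id set_append)
      ultimately show ?thesis using t by blast
    qed
    then have "(take (card S) xs, drop (card S) xs) \<in> my_perms S \<times> my_perms (M - S)"
      using dt t by (auto simp: my_perms_def)
    then have "?f (take (card S) xs, drop (card S) xs) \<in> ?f ` (my_perms S \<times> my_perms (M - S))"
      by (rule imageI)
    then show "xs \<in> ?f ` (my_perms S \<times> my_perms (M - S))"
      by simp
  next
    fix xs assume "xs \<in> ?f ` (my_perms S \<times> my_perms (M - S))"
    then obtain ys zs where xs: "xs = ys @ zs" and ys: "set ys = S" "distinct ys"
      and zs: "set zs = M - S" "distinct zs" by (auto simp: my_perms_def)
    have "length ys = card S" using ys distinct_card by fastforce
    then show "xs \<in> {xs\<in>my_perms M. set (take (card S) xs) = S}"
      using xs ys zs S by (auto simp: my_perms_def)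
  qed
  have inj: "inj_on ?f (my_perms S \<times> my_perms (M - S))"
  proof (rule inj_onI, clarsimp)
    fix ys zs ys' zs' assume "ys \<in> my_perms S" "ys' \<in> my_perms S"
      and "ys @ zs = ys' @ zs'"
    moreover have "length ys = length ys'" using calculation perm_length by metis
    ultimately show "ys = ys' \<and> zs = zs'" by simp
  qed
  have "card (?f ` (my_perms S \<times> my_perms (M - S)))
        = card (my_perms S) * card (my_perms (M - S))"
    by (simp only: card_image[OF inj] card_cartesian_product)
  also have "\<dots> = fact (card S) * fact (card (M - S))"
    using M fS by (simp only: card_my_perms finite_Diff)
  also have "\<dots> = fact (card S) * fact (card M - card S)"
    by (simp only: card_Diff_subset[OF fS S])
  finally show ?thesis unfolding eq .
qed

lemma LYM:
  assumes M: "finite M" and AM: "\<forall>S\<in>\<A>. S \<subseteq> M"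
    and anti: "\<forall>S\<in>\<A>. \<forall>T\<in>\<A>. S \<subseteq> T \<longrightarrow> S = T"
  shows "(\<Sum>S\<in>\<A>. 1 / real (card M choose card S)) \<le> 1"
proof -
  have fP: "finite (my_perms M)"
    using card_my_perms[OF M] by (intro card_ge_0_finite) simp
  have fA: "finite \<A>" using AM M by (intro finite_subset[of \<A> "Pow M"]) auto
  let ?P = "my_perms M"
  have key: "(\<Sum>S\<in>\<A>. card {xs\<in>?P. set (take (card S) xs) = S})
       = (\<Sum>xs\<in>?P. card {S\<in>\<A>. set (take (card S) xs) = S})"
  proof -
    have "(\<Sum>S\<in>\<A>. card {xs\<in>?P. set (take (card S) xs) = S})
        = (\<Sum>S\<in>\<A>. \<Sum>xs\<in>?P. if set (take (card S) xs) = S then 1 else 0)"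
    proof (rule sum.cong[OF refl])
      fix S show "card {xs\<in>?P. set (take (card S) xs) = S} = (\<Sum>xs\<in>?P. if set (take (card S) xs) = S then 1 else 0)"
        by (rule card_filter_sum[OF fP])
    qed
    also have "\<dots> = (\<Sum>xs\<in>?P. \<Sum>S\<in>\<A>. if set (take (card S) xs) = S then 1 else 0)"
      by (rule sum.swap)
    also have "\<dots> = (\<Sum>xs\<in>?P. card {S\<in>\<A>. set (take (card S) xs) = S})"
    proof (rule sum.cong[OF refl])
      fix xs show "(\<Sum>S\<in>\<A>. if set (take (card S) xs) = S then 1 else 0) = card {S\<in>\<A>. set (take (card S) xs) = S}"
        by (rule card_filter_sum[OF fA, symmetric])
    qed
    finally show ?thesis .
  qed
  have le1: "card {S\<in>\<A>. set (take (card S) xs) = S} \<le> 1" for xs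
  proof -
    have uniq: "S = T" if "S \<in> \<A>" "T \<in> \<A>" "set (take (card S) xs) = S" "set (take (card T) xs) = T" for S T
    proof (cases "card S \<le> card T")
      case True
      have "set (take (card S) xs) \<subseteq> set (take (card T) xs)"
        by (rule set_take_subset_set_take[OF True])
      then have "S \<subseteq> T" by (simp only: that(3) that(4))
      then show ?thesis using anti that(1,2) by blast
    next
      case False
      then have le: "card T \<le> card S" by simp
      have "set (take (card T) xs) \<subseteq> set (take (card S) xs)"
        by (rule set_take_subset_set_take[OF le])
      then have "T \<subseteq> S" by (simp only: that(3) that(4))
      then show ?thesis using anti that(1,2) by blast
    qed
    have fin: "finite {S\<in>\<A>. set (take (card S) xs) = S}" using fA by simp
    have "card {S\<in>\<A>. set (take (card S) xs) = S} \<le> Suc 0"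
    proof (subst card_le_Suc0_iff_eq[OF fin], intro ballI)
      fix a b assume a: "a \<in> {S\<in>\<A>. set (take (card S) xs) = S}" and b: "b \<in> {S\<in>\<A>. set (take (card S) xs) = S}"
      from a have a1: "a \<in> \<A>" and a2: "set (take (card a) xs) = a" by (simp_all only: mem_Collect_eq)
      from b have b1: "b \<in> \<A>" and b2: "set (take (card b) xs) = b" by (simp_all only: mem_Collect_eq)
      show "a = b" by (rule uniq[OF a1 b1 a2 b2])
    qed
    then show ?thesis by simp
  qed
  have F: "(\<Sum>S\<in>\<A>. fact (card S) * fact (card M - card S)) \<le> (fact (card M) :: nat)"
  proof -
    have "(\<Sum>S\<in>\<A>. fact (card S) * fact (card M - card S))
        = (\<Sum>S\<in>\<A>. card {xs\<in>?P. set (take (card S) xs) = S})"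
      using perm_prefix_card[OF M] AM by (intro sum.cong) auto
    also have "\<dots> \<le> (\<Sum>xs\<in>?P. 1)" unfolding key by (intro sum_mono le1)
    also have "\<dots> = fact (card M)" using M by (simp add: card_my_perms)
    finally show ?thesis .
  qed
  have *: "(\<Sum>S\<in>\<A>. real (fact (card S) * fact (card M - card S))) \<le> real (fact (card M))"
  proof -
    from F have "real (\<Sum>S\<in>\<A>. fact (card S) * fact (card M - card S)) \<le> real (fact (card M))"
      by (simp only: of_nat_le_iff)
    then show ?thesis by (simp only: of_nat_sum)
  qed
  have "(\<Sum>S\<in>\<A>. 1 / real (card M choose card S))
      = (\<Sum>S\<in>\<A>. real (fact (card S) * fact (card M - card S)) / real (fact (card M)))"
  proof (intro sum.cong refl)
    fix S assume "S \<in> \<A>"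
    then have "card S \<le> card M" using AM M by (intro card_mono) auto
    then have "real (card M choose card S) = fact (card M) / (fact (card S) * fact (card M - card S))"
      by (rule binomial_fact)
    moreover have "real (fact (card S) * fact (card M - card S)) = fact (card S) * fact (card M - card S)"
      by simp
    moreover have "real (fact (card M)) = fact (card M)" by simp
    ultimately show "1 / real (card M choose card S)
        = real (fact (card S) * fact (card M - card S)) / real (fact (card M))"
      by simp
  qed
  also have "\<dots> = (\<Sum>S\<in>\<A>. real (fact (card S) * fact (card M - card S))) / real (fact (card M))"
    by (simp add: sum_divide_distrib)
  also have "\<dots> \<le> 1" using * by simp
  finally show ?thesis .
qed




lemma central_even: "real ((2*m) choose m)^2 * (2*m+1) \<le> 4^(2*m)"
proof (induction m)
  case 0 then show ?case by simp
next
  case (Suc m)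
  have rec: "real ((2*Suc m) choose Suc m) = real ((2*m) choose m) * (2*(2*m+1)) / (m+1)"
  proof -
    obtain a b c where a: "a = (2*m) choose m" and b: "b = Suc (2*m) choose m"
      and c: "c = (2*Suc m) choose Suc m" by blast
    have b2: "b = Suc (2*m) choose Suc m"
      using central_binomial_odd[of "Suc (2*m)"] b by simp
    have e1: "Suc m * c = Suc (Suc (2*m)) * b"
      using Suc_times_binomial[of m "Suc (2*m)"] b c by simp
    have e2: "Suc m * b = Suc (2*m) * a"
      using Suc_times_binomial[of m "2*m"] a b2 by simp
    have "real c * (m+1) = (2*m+2) * real b" using e1
      by (metis of_nat_mult mult.commute of_nat_Suc Suc_eq_plus1 add_2_eq_Suc' add.commute)
    moreover have "real b * (m+1) = (2*m+1) * real a" using e2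
      by (metis of_nat_mult mult.commute of_nat_Suc Suc_eq_plus1)
    ultimately have "real c = real a * (2*(2*m+1)) / (m+1)"
      by (simp add: field_simps)
    then show ?thesis using a c by simp
  qed
  let ?c = "real ((2*m) choose m)"
  have "real ((2*Suc m) choose Suc m)^2 * (2*Suc m+1) = ?c^2 * (2*m+1) * (4*(2*m+1)*(2*m+3)/(m+1)^2)"
    unfolding rec by (simp add: field_simps power2_eq_square)
  also have "\<dots> \<le> 4^(2*m) * (4*(2*m+1)*(2*m+3)/(m+1)^2)"
    using Suc.IH by (intro mult_right_mono) auto
  also have "\<dots> \<le> 4^(2*m) * 16"
  proof -
    have "4*(2*m+1)*(2*m+3) \<le> 16 * (m+1)^2"
      by (simp add: algebra_simps power2_eq_square)
    then have "real (4*(2*m+1)*(2*m+3)) \<le> 16 * real ((m+1)^2)"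
      by (metis of_nat_le_iff of_nat_mult of_nat_numeral)
    then have "real (4*(2*m+1)*(2*m+3)) / real ((m+1)^2) \<le> 16"
      by (subst pos_divide_le_eq) auto
    then show ?thesis by (intro mult_left_mono) auto
  qed
  also have "\<dots> = 4^(2*Suc m)" by (simp add: power_add)
  finally show ?case by simp
qed

lemma central_bound: "real (r choose k) / 2^r \<le> 1 / sqrt (r+1)"
proof -
  have mx: "real (r choose k) \<le> real (r choose (r div 2))"
    using binomial_maximum by simp
  have sq: "real (r choose (r div 2))^2 * (r+1) \<le> 4^r"
  proof (cases "even r")
    case True
    then obtain m where r: "r = 2*m" by blast
    then show ?thesis using central_even[of m] by simp
  next
    case False
    then obtain m where r: "r = 2*m+1" using oddE by blast
    obtain b c where b: "b = Suc (2*m) choose m"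
      and c: "c = (2*Suc m) choose Suc m" by blast
    have e1: "Suc m * c = Suc (Suc (2*m)) * b"
      using Suc_times_binomial[of m "Suc (2*m)"] b c by simp
    have "real c * (m+1) = (2*m+2) * real b" using e1
      by (metis of_nat_mult mult.commute of_nat_Suc Suc_eq_plus1 add_2_eq_Suc' add.commute)
    then have "real c * (m+1) = (2 * real b) * (m+1)" by (simp add: algebra_simps)
    then have "real c = 2 * real b" by simp
    have rb: "r choose (r div 2) = b" using r b by simp
    have ce: "real c^2 * (2*Suc m+1) \<le> 4^(2*Suc m)"
      using central_even[of "Suc m"] by (simp only: c)
    have "real (r choose (r div 2))^2 * (r+1) = real c^2 * (2*m+2) / 4"
      unfolding rb using r \<open>real c = 2 * real b\<close> by (simp add: power2_eq_square field_simps)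
    also have "\<dots> \<le> real c^2 * (2*Suc m+1) / 4"
      by (intro divide_right_mono mult_left_mono) auto
    also have "\<dots> \<le> 4^(2*Suc m) / 4"
      using ce by (intro divide_right_mono) auto
    also have "\<dots> = 4^r" using r by (simp add: power_add)
    finally show ?thesis .
  qed
  have "real (r choose k)^2 * (r+1) \<le> 4^r"
    using sq mx by (smt (verit) mult_right_mono of_nat_0_le_iff power_mono)
  then have "(real (r choose k) / 2^r)^2 \<le> (1 / sqrt (r+1))^2"
    by (simp add: field_simps power_mult_distrib flip: power_mult)
       (metis mult.commute power_mult power2_eq_square numeral_Bit0 numeral_One one_add_one mult_2_right)
  then show ?thesis
    by (rule power2_le_imp_le) simp
qed




lemma mixture:
  fixes p :: real
  assumes "k \<le> n"
  shows "real (n choose k) * p^k * (1-p)^(n-k)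
    = (\<Sum>r\<le>n. real (n choose r) * (2*p)^r * (1-2*p)^(n-r) * (real (r choose k) / 2^r))"
proof -
  have "(\<Sum>r\<le>n. real (n choose r) * (2*p)^r * (1-2*p)^(n-r) * (real (r choose k) / 2^r))
      = (\<Sum>r\<le>n. real (n choose r) * real (r choose k) * p^r * (1-2*p)^(n-r))"
    by (intro sum.cong refl) (simp add: power_mult_distrib field_simps)
  also have "\<dots> = (\<Sum>r\<in>{k..n}. real (n choose r) * real (r choose k) * p^r * (1-2*p)^(n-r))"
    by (rule sum.mono_neutral_right) auto
  also have "\<dots> = (\<Sum>r\<in>{k..n}. real (n choose k) * real ((n-k) choose (r-k)) * p^r * (1-2*p)^(n-r))"
  proof (intro sum.cong refl)
    fix r assume "r \<in> {k..n}"
    then have "(n choose r) * (r choose k) = (n choose k) * ((n - k) choose (r - k))"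
      by (intro choose_mult) auto
    then have "real (n choose r) * real (r choose k) = real (n choose k) * real ((n - k) choose (r - k))"
      by (metis of_nat_mult)
    then show "real (n choose r) * real (r choose k) * p^r * (1-2*p)^(n-r)
        = real (n choose k) * real ((n-k) choose (r-k)) * p^r * (1-2*p)^(n-r)" by simp
  qed
  also have "\<dots> = (\<Sum>s\<in>{0..n-k}. real (n choose k) * real ((n-k) choose s) * p^(s+k) * (1-2*p)^((n-k)-s))"
  proof -
    have "{k..n} = {0+k..(n-k)+k}" using assms by simp
    then show ?thesis
      by (simp only: sum.shift_bounds_cl_nat_ivl) (intro sum.cong refl, simp add: add.commute)
  qed
  also have "\<dots> = real (n choose k) * p^k * (\<Sum>s\<le>n-k. real ((n-k) choose s) * p^s * (1-2*p)^((n-k)-s))"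
    by (simp add: sum_distrib_left atLeast0AtMost power_add algebra_simps)
  also have "\<dots> = real (n choose k) * p^k * (p + (1-2*p))^(n-k)"
    by (simp only: binomial_ring)
  also have "\<dots> = real (n choose k) * p^k * (1-p)^(n-k)" by simp
  finally show ?thesis by simp
qed

lemma inv_exp:
  fixes a :: real
  assumes "0 < a" "a \<le> 1"
  shows "(\<Sum>r\<le>n. real (n choose r) * a^r * (1-a)^(n-r) / (real r+1)) \<le> 1/((real n+1)*a)"
proof -
  let ?g = "\<lambda>s. real (Suc n choose s) * a^s * (1-a)^(Suc n - s)"
  have "(\<Sum>r\<le>n. real (n choose r) * a^r * (1-a)^(n-r) / (real r+1)) * ((real n+1)*a)
      = (\<Sum>r\<le>n. ?g (Suc r))"
    unfolding sum_distrib_right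
  proof (intro sum.cong refl)
    fix r assume "r \<in> {..n}"
    obtain C where C: "C = Suc n choose Suc r" by blast
    have "real (Suc n) * real (n choose r) = real C * real (Suc r)"
      using Suc_times_binomial_eq[of n r] C by (metis of_nat_mult)
    then have Ceq: "real C = real (Suc n) * real (n choose r) / real (Suc r)"
      by (simp add: field_simps)
    show "real (n choose r) * a^r * (1-a)^(n-r) / (real r+1) * ((real n+1)*a) = ?g (Suc r)"
      unfolding C[symmetric] Ceq by (simp add: field_simps)
  qed
  also have "\<dots> = (\<Sum>s\<le>Suc n. ?g s) - ?g 0"
    by (simp only: sum.atMost_Suc_shift)
  also have "(\<Sum>s\<le>Suc n. ?g s) = (a + (1-a))^(Suc n)"
    by (rule binomial_ring[symmetric])
  also have "?g 0 \<ge> 0" using assms by simp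
  then have "(a + (1-a))^(Suc n) - ?g 0 \<le> 1" by simp
  finally have "(\<Sum>r\<le>n. real (n choose r) * a^r * (1-a)^(n-r) / (real r+1)) * ((real n+1)*a) \<le> 1" .
  moreover have pos: "0 < (real n+1)*a" using assms by simp
  ultimately show ?thesis by (simp only: pos_le_divide_eq[OF pos])
qed

lemma amgm_inv_sqrt:
  fixes x t :: real assumes "x > 0" "t > 0"
  shows "1 / sqrt x \<le> (t / x + 1 / t) / 2"
proof -
  define u where "u = sqrt x"
  have u: "u > 0" "x = u^2" using assms by (auto simp: u_def)
  have "2 * t * u \<le> t^2 + u^2" using sum_squares_ge_zero[of t u]
    by (smt (verit) power2_diff zero_le_power2)
  then have "2 / u \<le> t / u^2 + 1 / t"
    using u assms by (simp add: field_simps power2_eq_square)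
  then show ?thesis using u unfolding u_def[symmetric] by simp
qed

lemma binom_pmf_half:
  fixes p :: real
  assumes "0 < p" "2*p \<le> 1"
  shows "real (n choose k) * p^k * (1-p)^(n-k) \<le> 1 / sqrt (2*(real n+1)*p)"
proof (cases "k \<le> n")
  case False
  then show ?thesis using assms by (simp add: binomial_eq_0)
next
  case True
  define a where "a = 2*p"
  have a: "0 < a" "a \<le> 1" using assms by (auto simp: a_def)
  define t where "t = sqrt ((real n+1)*a)"
  have t: "t > 0" using a by (simp add: t_def)
  let ?w = "\<lambda>r. real (n choose r) * a^r * (1-a)^(n-r)"
  have w0: "?w r \<ge> 0" for r using a by simp
  have "real (n choose k) * p^k * (1-p)^(n-k) = (\<Sum>r\<le>n. ?w r * (real (r choose k) / 2^r))"
    using mixture[OF True, of p] by (simp add: a_def)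
  also have "\<dots> \<le> (\<Sum>r\<le>n. ?w r * ((t / (real r+1) + 1/t) / 2))"
  proof (intro sum_mono mult_left_mono w0)
    fix r
    have "real (r choose k) / 2^r \<le> 1 / sqrt (r+1)" by (rule central_bound)
    also have "\<dots> \<le> (t / (real r+1) + 1/t) / 2"
      using amgm_inv_sqrt[of "real r + 1" t] t by (simp add: add.commute)
    finally show "real (r choose k) / 2^r \<le> (t / (real r+1) + 1/t) / 2" by simp
  qed
  also have "\<dots> = (\<Sum>r\<le>n. (t * (?w r / (real r+1)) + (1/t) * ?w r)) / 2"
    unfolding sum_divide_distrib
  proof (intro sum.cong refl)
    fix r
    show "?w r * ((t / (real r+1) + 1/t) / 2) = (t * (?w r / (real r+1)) + (1/t) * ?w r) / 2"
      using t by (simp add: field_simps)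
  qed
  also have "\<dots> = (t * (\<Sum>r\<le>n. ?w r / (real r+1)) + (1/t) * (\<Sum>r\<le>n. ?w r)) / 2"
    by (simp add: sum.distrib sum_distrib_left)
  also have "(\<Sum>r\<le>n. ?w r) = 1"
    using binomial_ring[of a "1-a" n] by simp
  also have X: "t * (\<Sum>r\<le>n. ?w r / (real r+1)) \<le> t * (1/((real n+1)*a))"
    by (rule mult_left_mono[OF inv_exp[OF a, of n]]) (use t in simp)
  have "(t * (\<Sum>r\<le>n. ?w r / (real r+1)) + (1/t) * 1) / 2 \<le> (t * (1/((real n+1)*a)) + (1/t) * 1) / 2"
    by (rule divide_right_mono[OF add_right_mono[OF X]]) simp
  also have "\<dots> = (t * (1/((real n+1)*a)) + (1/t)) / 2" by simp
  also have "\<dots> = 1 / t"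
  proof -
    have "t^2 = (real n+1)*a" unfolding t_def using a by simp
    then have "t * (1/((real n+1)*a)) = t * (1/(t*t))" by (simp add: power2_eq_square)
    also have "\<dots> = 1/t" using t by (simp add: field_simps)
    finally have "t * (1/((real n+1)*a)) = 1/t" .
    then show ?thesis by simp
  qed
  also have "\<dots> = 1 / sqrt (2*(real n+1)*p)" by (simp add: t_def a_def algebra_simps)
  finally show ?thesis .
qed

lemma binom_pmf_bound:
  fixes p :: real
  assumes "0 < p" "p < 1"
  shows "real (n choose k) * p^k * (1-p)^(n-k) \<le> 1 / sqrt (2*(real n+1)*min p (1-p))"
proof (cases "2*p \<le> 1")
  case True
  then show ?thesis using binom_pmf_half[OF assms(1) True] by (simp add: min_def)
next
  case False
  show ?thesis
  proof (cases "k \<le> n")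
    case False then show ?thesis using assms by (simp add: binomial_eq_0)
  next
    case True
    have "real (n choose k) * p^k * (1-p)^(n-k) = real (n choose (n-k)) * (1-p)^(n-k) * (1-(1-p))^(n-(n-k))"
      using True binomial_symmetric[OF True] by simp
    also have "\<dots> \<le> 1 / sqrt (2*(real n+1)*(1-p))"
      by (rule binom_pmf_half) (use assms False in auto)
    also have "\<dots> = 1 / sqrt (2*(real n+1)*min p (1-p))"
      using False by (simp add: min_def)
    finally show ?thesis .
  qed
qed




definition wt :: "real \<Rightarrow> nat \<Rightarrow> nat set \<Rightarrow> real" where
  "wt p n S = p ^ card S * (1-p) ^ (n - card S)"

lemma wt_nonneg: "0 \<le> p \<Longrightarrow> p \<le> 1 \<Longrightarrow> 0 \<le> wt p n S"
  by (simp add: wt_def)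

lemma antichain_weight:
  fixes p :: real
  assumes M: "finite M" and AM: "\<forall>S\<in>\<A>. S \<subseteq> M"
    and anti: "\<forall>S\<in>\<A>. \<forall>T\<in>\<A>. S \<subseteq> T \<longrightarrow> S = T"
    and p: "0 < p" "p < 1"
  shows "(\<Sum>S\<in>\<A>. wt p (card M) S) \<le> 1 / sqrt (2*(real (card M)+1)*min p (1-p))"
proof -
  let ?\<beta> = "1 / sqrt (2*(real (card M)+1)*min p (1-p))"
  have "(\<Sum>S\<in>\<A>. wt p (card M) S) \<le> (\<Sum>S\<in>\<A>. ?\<beta> * (1 / real (card M choose card S)))"
  proof (intro sum_mono)
    fix S assume "S \<in> \<A>"
    then have le: "card S \<le> card M" using AM M by (intro card_mono) auto
    then have pos: "real (card M choose card S) > 0" by simp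
    have "wt p (card M) S = (real (card M choose card S) * p ^ card S * (1-p)^(card M - card S)) / real (card M choose card S)"
      using pos by (simp add: wt_def)
    also have "\<dots> \<le> ?\<beta> / real (card M choose card S)"
      by (intro divide_right_mono binom_pmf_bound p) simp
    finally show "wt p (card M) S \<le> ?\<beta> * (1 / real (card M choose card S))" by simp
  qed
  also have "\<dots> = ?\<beta> * (\<Sum>S\<in>\<A>. 1 / real (card M choose card S))"
    by (simp add: sum_distrib_left)
  also have "\<dots> \<le> ?\<beta> * 1"
    by (intro mult_left_mono LYM[OF M AM anti]) (use p in simp)
  finally show ?thesis by simp
qed

lemma LO:
  fixes x :: "nat \<Rightarrow> int" and p :: real
  assumes G: "finite G" and I: "card {a..b} \<le> N"
    and sg: "(\<forall>j\<in>G. x j > int N) \<or> (\<forall>j\<in>G. x j < - int N)"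
    and p: "0 < p" "p < 1"
  shows "(\<Sum>U\<in>Pow G. wt p (card G) U * (if (\<Sum>j\<in>U. x j) \<in> {a..b} then 1 else 0))
         \<le> 1 / sqrt (2*(real (card G)+1)*min p (1-p))"
proof -
  let ?A = "{U\<in>Pow G. (\<Sum>j\<in>U. x j) \<in> {a..b}}"
  have "(\<Sum>U\<in>Pow G. wt p (card G) U * (if (\<Sum>j\<in>U. x j) \<in> {a..b} then 1 else 0))
      = (\<Sum>U\<in>Pow G. if (\<Sum>j\<in>U. x j) \<in> {a..b} then wt p (card G) U else 0)"
    by (intro sum.cong) auto
  also have "\<dots> = (\<Sum>U\<in>?A. wt p (card G) U)"
    by (rule sum.inter_filter[symmetric]) (use G in simp)
  also have "\<dots> \<le> 1 / sqrt (2*(real (card G)+1)*min p (1-p))"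
  proof (rule antichain_weight[OF G _ _ p])
    show "\<forall>S\<in>?A. S \<subseteq> G" by auto
    show "\<forall>S\<in>?A. \<forall>T\<in>?A. S \<subseteq> T \<longrightarrow> S = T"
    proof (intro ballI impI, rule ccontr)
      fix S T assume S: "S \<in> ?A" and T: "T \<in> ?A" and ST: "S \<subseteq> T" and ne: "S \<noteq> T"
      have fT: "finite T" using T G finite_subset by auto
      define D where "D = T - S"
      have Dne: "D \<noteq> {}" using ST ne D_def by blast
      have fD: "finite D" using fT D_def by simp
      have DG: "D \<subseteq> G" using T D_def by auto
      have split: "(\<Sum>j\<in>T. x j) = (\<Sum>j\<in>S. x j) + (\<Sum>j\<in>D. x j)"
        unfolding D_def using sum.subset_diff[OF ST fT, of x] by simp
      have cardD: "card D \<ge> 1" using Dne fD by (simp add: Suc_le_eq card_gt_0_iff)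
      have bnd: "\<bar>(\<Sum>j\<in>D. x j)\<bar> \<le> int N - 1"
      proof -
        have "(\<Sum>j\<in>S. x j) \<in> {a..b}" "(\<Sum>j\<in>T. x j) \<in> {a..b}" using S T by auto
        moreover have "b - a + 1 \<le> int N" using I by simp
        ultimately show ?thesis using split by auto
      qed
      from sg show False
      proof
        assume pos: "\<forall>j\<in>G. x j > int N"
        have "(\<Sum>j\<in>D. int N + 1) \<le> (\<Sum>j\<in>D. x j)"
        proof (rule sum_mono)
          fix j assume "j \<in> D" then have "j \<in> G" using DG by blast
          then show "int N + 1 \<le> x j" using pos by (meson zless_imp_add1_zle)
        qed
        moreover have "(\<Sum>j\<in>D. int N + 1) = int (card D) * (int N + 1)" by simp
        moreover have "int (card D) * (int N + 1) \<ge> int N + 1"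
          using mult_right_mono[of 1 "int (card D)" "int N + 1"] cardD by simp
        moreover have "sum x D \<le> int N - 1" using bnd by (simp add: abs_le_iff)
        ultimately show False by linarith
      next
        assume neg: "\<forall>j\<in>G. x j < - int N"
        have "(\<Sum>j\<in>D. x j) \<le> (\<Sum>j\<in>D. - int N - 1)"
        proof (rule sum_mono)
          fix j assume "j \<in> D" then have "j \<in> G" using DG by blast
          then show "x j \<le> - int N - 1" using neg by fastforce
        qed
        moreover have "(\<Sum>j\<in>D. - int N - 1) = - (int (card D) * (int N + 1))" by (simp add: algebra_simps)
        moreover have "int (card D) * (int N + 1) \<ge> int N + 1"
          using mult_right_mono[of 1 "int (card D)" "int N + 1"] cardD by simp
        moreover have "- sum x D \<le> int N - 1" using bnd by (simp add: abs_le_iff)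
        ultimately show False by linarith
      qed
    qed
  qed
  finally show ?thesis .
qed



lemma wt_mass:
  fixes p :: real
  assumes "finite A"
  shows "(\<Sum>T\<in>Pow A. wt p (card A) T) = 1"
  using assms
proof (induction A rule: finite_induct)
  case empty
  then show ?case by (simp add: wt_def)
next
  case (insert a A)
  have inj: "inj_on (insert a) (Pow A)"
  proof (rule inj_onI)
    fix S T assume S: "S \<in> Pow A" and T: "T \<in> Pow A" and e: "insert a S = insert a T"
    have "a \<notin> S" "a \<notin> T" using S T insert.hyps(2) by auto
    then have "S = insert a S - {a}" "T = insert a T - {a}" by simp_all
    then show "S = T" using e by simp
  qed
  have disj: "Pow A \<inter> insert a ` Pow A = {}" using insert.hyps(2) by auto
  have c: "card (insert a A) = Suc (card A)" using insert.hyps by simp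
  have "(\<Sum>T\<in>Pow (insert a A). wt p (card (insert a A)) T)
      = (\<Sum>T\<in>Pow A. wt p (Suc (card A)) T) + (\<Sum>T\<in>insert a ` Pow A. wt p (Suc (card A)) T)"
    unfolding Pow_insert c using insert.hyps(1) disj by (simp add: sum.union_disjoint)
  also have "(\<Sum>T\<in>insert a ` Pow A. wt p (Suc (card A)) T) = (\<Sum>T\<in>Pow A. wt p (Suc (card A)) (insert a T))"
    by (simp add: sum.reindex[OF inj])
  also have "(\<Sum>T\<in>Pow A. wt p (Suc (card A)) T) = (\<Sum>T\<in>Pow A. (1-p) * wt p (card A) T)"
  proof (intro sum.cong refl)
    fix T assume "T \<in> Pow A"
    then have "card T \<le> card A" using insert.hyps(1) card_mono by auto
    then have "Suc (card A) - card T = Suc (card A - card T)" by (simp add: Suc_diff_le)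
    then show "wt p (Suc (card A)) T = (1-p) * wt p (card A) T" by (simp add: wt_def)
  qed
  also have "(\<Sum>T\<in>Pow A. wt p (Suc (card A)) (insert a T)) = (\<Sum>T\<in>Pow A. p * wt p (card A) T)"
  proof (intro sum.cong refl)
    fix T assume "T \<in> Pow A"
    then have "finite T" "a \<notin> T" using insert.hyps finite_subset by auto
    then have "card (insert a T) = Suc (card T)" by simp
    then show "wt p (Suc (card A)) (insert a T) = p * wt p (card A) T" by (simp add: wt_def)
  qed
  finally show ?case using insert.IH by (simp add: sum_distrib_left[symmetric])
qed

lemma wt_split:
  fixes p :: real and g :: "nat set \<Rightarrow> real"
  assumes L: "finite L" and GL: "G \<subseteq> L"
  shows "(\<Sum>S\<in>Pow L. wt p (card L) S * g S)
       = (\<Sum>T\<in>Pow (L-G). wt p (card (L-G)) T * (\<Sum>U\<in>Pow G. wt p (card G) U * g (T \<union> U)))"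
proof -
  have fG: "finite G" using L GL finite_subset by auto
  let ?h = "\<lambda>(T,U). T \<union> (U::nat set)"
  have inj: "inj_on ?h (Pow (L-G) \<times> Pow G)"
  proof (rule inj_onI, clarsimp)
    fix T U T' U' assume "T \<subseteq> L - G" "U \<subseteq> G" "T' \<subseteq> L - G" "U' \<subseteq> G" "T \<union> U = T' \<union> U'"
    then show "T = T' \<and> U = U'" by blast
  qed
  have img: "?h ` (Pow (L-G) \<times> Pow G) = Pow L"
  proof (intro equalityI subsetI)
    fix S assume "S \<in> ?h ` (Pow (L-G) \<times> Pow G)"
    then show "S \<in> Pow L" using GL by auto
  next
    fix S assume S: "S \<in> Pow L"
    have "S = ?h (S - G, S \<inter> G)" by auto
    moreover have "(S - G, S \<inter> G) \<in> Pow (L-G) \<times> Pow G" using S by auto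
    ultimately show "S \<in> ?h ` (Pow (L-G) \<times> Pow G)" by (rule image_eqI)
  qed
  have wsplit: "wt p (card L) (T \<union> U) = wt p (card (L-G)) T * wt p (card G) U"
    if T: "T \<subseteq> L - G" and U: "U \<subseteq> G" for T U
  proof -
    have fT: "finite T" using T L finite_subset by auto
    have fU: "finite U" using U fG finite_subset by auto
    have cTU: "card (T \<union> U) = card T + card U"
      using T U fT fU by (intro card_Un_disjoint) auto
    have cL: "card L = card (L-G) + card G"
      using card_Diff_subset[OF fG GL] card_mono[OF L GL] by simp
    have cT: "card T \<le> card (L-G)" using T L by (intro card_mono) auto
    have cU: "card U \<le> card G" using U fG by (intro card_mono) auto
    have e: "card L - (card T + card U) = (card (L-G) - card T) + (card G - card U)"
      using cTU cL cT cU by simp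
    show ?thesis unfolding wt_def cTU e by (simp add: power_add)
  qed
  have "(\<Sum>T\<in>Pow (L-G). wt p (card (L-G)) T * (\<Sum>U\<in>Pow G. wt p (card G) U * g (T \<union> U)))
      = (\<Sum>T\<in>Pow (L-G). \<Sum>U\<in>Pow G. wt p (card L) (T \<union> U) * g (T \<union> U))"
  proof (intro sum.cong refl)
    fix T assume T: "T \<in> Pow (L-G)"
    show "wt p (card (L-G)) T * (\<Sum>U\<in>Pow G. wt p (card G) U * g (T \<union> U))
        = (\<Sum>U\<in>Pow G. wt p (card L) (T \<union> U) * g (T \<union> U))"
      unfolding sum_distrib_left
    proof (intro sum.cong refl)
      fix U assume "U \<in> Pow G"
      then show "wt p (card (L-G)) T * (wt p (card G) U * g (T \<union> U)) = wt p (card L) (T \<union> U) * g (T \<union> U)"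
        using wsplit[of T U] T by simp
    qed
  qed
  also have "\<dots> = (\<Sum>(T,U)\<in>Pow (L-G) \<times> Pow G. wt p (card L) (T \<union> U) * g (T \<union> U))"
    by (rule sum.cartesian_product)
  also have "\<dots> = (\<Sum>S\<in>?h ` (Pow (L-G) \<times> Pow G). wt p (card L) S * g S)"
    by (subst sum.reindex[OF inj]) (simp add: case_prod_unfold)
  also have "\<dots> = (\<Sum>S\<in>Pow L. wt p (card L) S * g S)" unfolding img ..
  finally show ?thesis by simp
qed

lemma window_bound:
  fixes x :: "nat \<Rightarrow> int" and p :: real
  assumes L: "finite L" and GL: "G \<subseteq> L" and I: "card {a..b} \<le> N"
    and sg: "(\<forall>j\<in>G. x j > int N) \<or> (\<forall>j\<in>G. x j < - int N)"
    and p: "0 < p" "p < 1"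
  shows "(\<Sum>S\<in>Pow L. wt p (card L) S * (if (\<Sum>j\<in>S. x j) \<in> {a..b} then 1 else 0))
         \<le> 1 / sqrt (2*(real (card G)+1)*min p (1-p))"
proof -
  let ?\<beta> = "1 / sqrt (2*(real (card G)+1)*min p (1-p))"
  have fG: "finite G" using L GL finite_subset by auto
  have "(\<Sum>S\<in>Pow L. wt p (card L) S * (if (\<Sum>j\<in>S. x j) \<in> {a..b} then 1 else 0))
      = (\<Sum>T\<in>Pow (L-G). wt p (card (L-G)) T *
          (\<Sum>U\<in>Pow G. wt p (card G) U * (if (\<Sum>j\<in>T \<union> U. x j) \<in> {a..b} then 1 else 0)))"
    by (rule wt_split[OF L GL])
  also have "\<dots> \<le> (\<Sum>T\<in>Pow (L-G). wt p (card (L-G)) T * ?\<beta>)"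
  proof (intro sum_mono mult_left_mono wt_nonneg)
    fix T assume T: "T \<in> Pow (L-G)"
    have fT: "finite T" using T L finite_subset by auto
    have "(\<Sum>U\<in>Pow G. wt p (card G) U * (if (\<Sum>j\<in>T \<union> U. x j) \<in> {a..b} then 1 else 0))
        = (\<Sum>U\<in>Pow G. wt p (card G) U * (if (\<Sum>j\<in>U. x j) \<in> {a - (\<Sum>j\<in>T. x j)..b - (\<Sum>j\<in>T. x j)} then 1 else 0))"
    proof (intro sum.cong refl)
      fix U assume U: "U \<in> Pow G"
      have fU: "finite U" using U fG finite_subset by auto
      have "(\<Sum>j\<in>T \<union> U. x j) = (\<Sum>j\<in>T. x j) + (\<Sum>j\<in>U. x j)"
        using T U fT fU by (intro sum.union_disjoint) auto
      then show "wt p (card G) U * (if (\<Sum>j\<in>T \<union> U. x j) \<in> {a..b} then 1 else 0)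
          = wt p (card G) U * (if (\<Sum>j\<in>U. x j) \<in> {a - (\<Sum>j\<in>T. x j)..b - (\<Sum>j\<in>T. x j)} then 1 else 0)"
        by auto
    qed
    also have "\<dots> \<le> ?\<beta>"
    proof (rule LO[OF fG _ sg p])
      show "card {a - (\<Sum>j\<in>T. x j)..b - (\<Sum>j\<in>T. x j)} \<le> N" using I by simp
    qed
    finally show "(\<Sum>U\<in>Pow G. wt p (card G) U * (if (\<Sum>j\<in>T \<union> U. x j) \<in> {a..b} then 1 else 0)) \<le> ?\<beta>" .
  qed (use p in auto)
  also have "\<dots> = ?\<beta>"
    using wt_mass[of "L-G" p] L by (simp add: sum_divide_distrib[symmetric])
  finally show ?thesis .
qed

lemma frand_window:
  fixes f :: "int \<Rightarrow> real" and x :: "nat \<Rightarrow> int" and p \<beta> :: real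
  assumes f0: "\<forall>t. f t \<ge> 0" and f1: "(f has_sum 1) UNIV"
    and win: "\<And>c d. card {c..d} = card {a..b} \<Longrightarrow>
       (\<Sum>S\<in>Pow {1..l}. wt p l S * (if (\<Sum>j\<in>S. x j) \<in> {c..d} then 1 else 0)) \<le> \<beta>"
    and \<beta>: "0 \<le> \<beta>"
  shows "(\<Sum>t\<in>{a..b}. frand p l f x t) \<le> \<beta>"
proof -
  let ?P = "Pow {1..l::nat}"
  let ?\<sigma> = "\<lambda>S. (\<Sum>j\<in>S. x j)"
  let ?ind = "\<lambda>S u. if ?\<sigma> S \<in> {u-b..u-a} then 1 else (0::real)"
  define F where "F = (\<Union>S\<in>?P. (\<lambda>t. t + ?\<sigma> S) ` {a..b})"
  have fF: "finite F" unfolding F_def by simp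
  have inner: "(\<Sum>t\<in>{a..b}. f (t + ?\<sigma> S)) = (\<Sum>u\<in>F. f u * ?ind S u)" if S: "S \<in> ?P" for S
  proof -
    have sub: "(\<lambda>t. t + ?\<sigma> S) ` {a..b} \<subseteq> F" unfolding F_def using S by blast
    have eqset: "{u\<in>F. ?\<sigma> S \<in> {u-b..u-a}} = (\<lambda>t. t + ?\<sigma> S) ` {a..b}"
    proof (intro equalityI subsetI)
      fix u assume "u \<in> {u\<in>F. ?\<sigma> S \<in> {u-b..u-a}}"
      then have "u - ?\<sigma> S \<in> {a..b}" by auto
      then show "u \<in> (\<lambda>t. t + ?\<sigma> S) ` {a..b}" by (rule rev_image_eqI) simp
    next
      fix u assume u: "u \<in> (\<lambda>t. t + ?\<sigma> S) ` {a..b}"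
      then show "u \<in> {u\<in>F. ?\<sigma> S \<in> {u-b..u-a}}" using sub by auto
    qed
    have "(\<Sum>u\<in>F. f u * ?ind S u) = (\<Sum>u\<in>F. if ?\<sigma> S \<in> {u-b..u-a} then f u else 0)"
      by (intro sum.cong refl) simp
    also have "\<dots> = (\<Sum>u\<in>{u\<in>F. ?\<sigma> S \<in> {u-b..u-a}}. f u)"
      by (rule sum.inter_filter[OF fF, symmetric])
    also have "\<dots> = (\<Sum>u\<in>(\<lambda>t. t + ?\<sigma> S) ` {a..b}. f u)" unfolding eqset ..
    also have "\<dots> = (\<Sum>t\<in>{a..b}. f (t + ?\<sigma> S))"
      by (subst sum.reindex) (auto simp: inj_on_def)
    finally show ?thesis by simp
  qed
  have "(\<Sum>t\<in>{a..b}. frand p l f x t) = (\<Sum>t\<in>{a..b}. \<Sum>S\<in>?P. wt p l S * f (t + ?\<sigma> S))"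
    unfolding frand_def wt_def by simp
  also have "\<dots> = (\<Sum>S\<in>?P. wt p l S * (\<Sum>t\<in>{a..b}. f (t + ?\<sigma> S)))"
    by (subst sum.swap) (simp add: sum_distrib_left)
  also have "\<dots> = (\<Sum>S\<in>?P. wt p l S * (\<Sum>u\<in>F. f u * ?ind S u))"
    using inner by (intro sum.cong refl) simp
  also have "\<dots> = (\<Sum>S\<in>?P. \<Sum>u\<in>F. f u * (wt p l S * ?ind S u))"
    by (simp add: sum_distrib_left mult_ac)
  also have "\<dots> = (\<Sum>u\<in>F. \<Sum>S\<in>?P. f u * (wt p l S * ?ind S u))"
    by (rule sum.swap)
  also have "\<dots> = (\<Sum>u\<in>F. f u * (\<Sum>S\<in>?P. wt p l S * ?ind S u))"
    by (simp add: sum_distrib_left)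
  also have "\<dots> \<le> (\<Sum>u\<in>F. f u * \<beta>)"
  proof (intro sum_mono mult_left_mono)
    fix u assume "u \<in> F"
    show "(\<Sum>S\<in>?P. wt p l S * ?ind S u) \<le> \<beta>"
      by (rule win) simp
    show "0 \<le> f u" using f0 by simp
  qed
  also have "\<dots> = (\<Sum>u\<in>F. f u) * \<beta>" by (simp add: sum_distrib_right)
  also have "\<dots> \<le> 1 * \<beta>"
  proof (intro mult_right_mono \<beta>)
    show "(\<Sum>u\<in>F. f u) \<le> 1"
      by (rule finite_sum_le_has_sum[OF f1 fF]) (use f0 in auto)
  qed
  finally show ?thesis by simp
qed




lemma split_interval:
  fixes g :: "int \<Rightarrow> real"
  assumes N: "N \<ge> 1" and \<beta>: "0 \<le> \<beta>"
    and H: "\<And>a b. card {a..b} \<le> N \<Longrightarrow> (\<Sum>t\<in>{a..b}. g t) \<le> \<beta>"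
  shows "(\<Sum>t\<in>{a..b}. g t) \<le> (real (card {a..b}) / real N + 1) * \<beta>"
proof (induction "card {a..b}" arbitrary: a rule: less_induct)
  case less
  show ?case
  proof (cases "card {a..b} \<le> N")
    case True
    have "(\<Sum>t\<in>{a..b}. g t) \<le> \<beta>" by (rule H[OF True])
    also have "\<dots> \<le> (real (card {a..b}) / real N + 1) * \<beta>"
      using \<beta> by (simp add: mult_le_cancel_right1 add_increasing)
    finally show ?thesis .
  next
    case False
    then have ab: "b - a + 1 > int N" by simp
    have split: "{a..b} = {a..a + int N - 1} \<union> {a + int N..b}" using ab by auto
    have disj: "{a..a + int N - 1} \<inter> {a + int N..b} = {}" by auto
    have c1: "card {a..a + int N - 1} = N" by simp
    have c2: "card {a + int N..b} = card {a..b} - N" using ab by simp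
    have lt: "card {a + int N..b} < card {a..b}" using c2 N False by simp
    have "(\<Sum>t\<in>{a..b}. g t) = (\<Sum>t\<in>{a..a + int N - 1}. g t) + (\<Sum>t\<in>{a + int N..b}. g t)"
      unfolding split by (rule sum.union_disjoint) (use disj in auto)
    also have "\<dots> \<le> \<beta> + (real (card {a + int N..b}) / real N + 1) * \<beta>"
      using H[of a "a + int N - 1"] c1 less(1)[OF lt] by (intro add_mono) auto
    also have "\<dots> = (real (card {a..b}) / real N + 1) * \<beta>"
    proof -
      have "real (card {a + int N..b}) = real (card {a..b}) - real N" using c2 False by simp
      then show ?thesis using N by (simp add: field_simps)
    qed
    finally show ?thesis .
  qed
qed

lemma main_bound:
  fixes p \<delta>0 :: real and f :: "int \<Rightarrow> real" and N n :: nat and K \<delta> :: real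
    and A :: "nat \<Rightarrow> int set" and l :: nat and x :: "nat \<Rightarrow> int"
  assumes H: "0 < p \<and> p < 1 \<and> 0 < \<delta>0 \<and> \<delta>0 < 1 \<and>
       (\<forall>t. f t \<ge> 0) \<and> (f has_sum 1) UNIV \<and>
       admissible N n K \<delta> A \<and> \<delta>0 \<le> \<delta> \<and> \<delta> < 1 \<and> real n \<ge> 1 / \<delta>0 \<and>
       \<delta>0 * real n < real l \<and> l \<le> n \<and>
       (\<forall>j\<in>{1..l}. x j \<in> A j)"
  shows "(\<forall>a b::int. card {a..b} \<le> N \<longrightarrow>
          (\<Sum>t\<in>{a..b}. frand p l f x t) \<le> 1 / sqrt (\<delta>0 * real n * min p (1 - p))) \<and>
       (\<forall>a b::int. card {a..b} \<ge> N \<longrightarrow>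
          (\<Sum>t\<in>{a..b}. frand p l f x t)
            \<le> 2 * 1 * real (card {a..b}) / (sqrt (\<delta>0 * real n * min p (1 - p)) * real N))"
proof (rule conjI)
  from H have p: "0 < p" "p < 1" and d0: "0 < \<delta>0" "\<delta>0 \<le> \<delta>"
    and f0: "\<forall>t. f t \<ge> 0" and f1: "(f has_sum 1) UNIV"
    and adm: "admissible N n K \<delta> A" and nd: "real n \<ge> 1 / \<delta>0"
    and ll: "\<delta>0 * real n < real l" "l \<le> n" and xA: "\<forall>j\<in>{1..l}. x j \<in> A j"
    by auto
  have N1: "N \<ge> 1" using adm by (simp add: admissible_def)
  have avoid: "\<forall>i\<in>{1..n}. real i \<le> \<delta> * real n \<longrightarrow> A i \<inter> {- int N..int N} = {}"
    using adm by (simp add: admissible_def)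
  define q where "q = min p (1-p)"
  have q: "q > 0" using p by (simp add: q_def)
  have dn1: "\<delta>0 * real n \<ge> 1"
  proof -
    have "\<delta>0 * real n \<ge> \<delta>0 * (1/\<delta>0)" using nd d0 by (intro mult_left_mono) auto
    then show ?thesis using d0 by simp
  qed
  define \<beta> where "\<beta> = 1 / sqrt (\<delta>0 * real n * q)"
  have dnq: "\<delta>0 * real n * q > 0" using dn1 q by simp
  have \<beta>0: "\<beta> \<ge> 0" unfolding \<beta>_def using dnq by simp
  define m where "m = nat \<lfloor>\<delta>0 * real n\<rfloor>"
  have m1: "real m \<le> \<delta>0 * real n" "\<delta>0 * real n < real m + 1"
    unfolding m_def using dn1 by (simp_all add: of_nat_floor)
  have ml: "m \<le> l" using m1 ll by linarith
  define B where "B = {1..m}"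
  have big: "x j > int N \<or> x j < - int N" if j: "j \<in> B" for j
  proof -
    have j1: "j \<in> {1..l}" "j \<in> {1..n}" using j ml ll unfolding B_def by auto
    have "real j \<le> real m" using j unfolding B_def by simp
    also have "\<dots> \<le> \<delta>0 * real n" by (rule m1(1))
    also have "\<dots> \<le> \<delta> * real n" using d0 by (intro mult_right_mono) auto
    finally have "A j \<inter> {- int N..int N} = {}" using avoid j1 by blast
    moreover have "x j \<in> A j" using xA j1 by blast
    ultimately have "x j \<notin> {- int N..int N}" by blast
    then show ?thesis by auto
  qed
  define P where "P = {j\<in>B. x j > int N}"
  define Q where "Q = {j\<in>B. x j < - int N}"
  have PQ: "card P + card Q = m"
  proof -
    have "P \<union> Q = B" using big unfolding P_def Q_def by auto
    moreover have "P \<inter> Q = {}" unfolding P_def Q_def by auto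
    moreover have "finite P" "finite Q" unfolding P_def Q_def B_def by auto
    ultimately have "card B = card P + card Q" by (metis card_Un_disjoint)
    then show ?thesis unfolding B_def by simp
  qed
  define G where "G = (if card Q \<le> card P then P else Q)"
  have G2: "2 * card G \<ge> m" using PQ unfolding G_def by auto
  have GL: "G \<subseteq> {1..l}" using ml unfolding G_def P_def Q_def B_def by auto
  have sg: "(\<forall>j\<in>G. x j > int N) \<or> (\<forall>j\<in>G. x j < - int N)"
    unfolding G_def P_def Q_def by auto
  have \<beta>G: "1 / sqrt (2*(real (card G)+1)*min p (1-p)) \<le> \<beta>"
  proof -
    have "\<delta>0 * real n * q \<le> 2*(real (card G)+1) * q"
    proof (intro mult_right_mono)
      have "real m \<le> 2 * real (card G)" using G2 by linarith
      then have "\<delta>0 * real n \<le> 2*real (card G) + 2" using m1 by linarith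
      then show "\<delta>0 * real n \<le> 2*(real (card G)+1)" by simp
    qed (use q in auto)
    then have "sqrt (\<delta>0 * real n * q) \<le> sqrt (2*(real (card G)+1) * q)"
      by (rule real_sqrt_le_mono)
    moreover have "sqrt (\<delta>0 * real n * q) > 0" using dn1 q by simp
    ultimately show ?thesis unfolding \<beta>_def q_def
      by (intro divide_left_mono) (auto simp: q_def[symmetric])
  qed
  have part1: "(\<Sum>t\<in>{a..b}. frand p l f x t) \<le> \<beta>" if ab: "card {a..b} \<le> N" for a b :: int
  proof (rule frand_window[OF f0 f1 _ \<beta>0])
    fix c d :: int assume "card {c..d} = card {a..b}"
    then have cd: "card {c..d} \<le> N" using ab by simp
    have "(\<Sum>S\<in>Pow {1..l}. wt p (card {1..l}) S * (if (\<Sum>j\<in>S. x j) \<in> {c..d} then 1 else 0))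
        \<le> 1 / sqrt (2*(real (card G)+1)*min p (1-p))"
      by (rule window_bound[OF _ GL cd sg p]) simp
    then show "(\<Sum>S\<in>Pow {1..l}. wt p l S * (if (\<Sum>j\<in>S. x j) \<in> {c..d} then 1 else 0)) \<le> \<beta>"
      using \<beta>G by simp
  qed
  show "\<forall>a b::int. card {a..b} \<le> N \<longrightarrow>
          (\<Sum>t\<in>{a..b}. frand p l f x t) \<le> 1 / sqrt (\<delta>0 * real n * min p (1 - p))"
    using part1 unfolding \<beta>_def q_def by blast
  show "\<forall>a b::int. card {a..b} \<ge> N \<longrightarrow>
          (\<Sum>t\<in>{a..b}. frand p l f x t)
            \<le> 2 * 1 * real (card {a..b}) / (sqrt (\<delta>0 * real n * min p (1 - p)) * real N)"
  proof (intro allI impI)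
    fix a b :: int assume ge: "card {a..b} \<ge> N"
    have "(\<Sum>t\<in>{a..b}. frand p l f x t) \<le> (real (card {a..b}) / real N + 1) * \<beta>"
      by (rule split_interval[OF N1 \<beta>0 part1])
    also have "\<dots> \<le> (2 * real (card {a..b}) / real N) * \<beta>"
    proof (intro mult_right_mono \<beta>0)
      define r where "r = real (card {a..b}) / real N"
      have "real N \<le> real (card {a..b})" using ge by simp
      then have le: "1 \<le> r" using N1 unfolding r_def by simp
      have eq: "2 * real (card {a..b}) / real N = 2 * r" unfolding r_def by simp
      show "real (card {a..b}) / real N + 1 \<le> 2 * real (card {a..b}) / real N"
        using r_def eq le by linarith
    qed
    also have "\<dots> = 2 * 1 * real (card {a..b}) / (sqrt (\<delta>0 * real n * min p (1 - p)) * real N)"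
      unfolding \<beta>_def q_def by simp
    finally show "(\<Sum>t\<in>{a..b}. frand p l f x t)
            \<le> 2 * 1 * real (card {a..b}) / (sqrt (\<delta>0 * real n * min p (1 - p)) * real N)" .
  qed
qed

theorem lemma4p3:
  shows "\<exists>C::real. C > 0 \<and>
    (\<forall>(p::real) (\<delta>0::real) (f::int \<Rightarrow> real) (N::nat) (n::nat) (K::real) (\<delta>::real)
        (A::nat \<Rightarrow> int set) (l::nat) (x::nat \<Rightarrow> int).
       0 < p \<and> p < 1 \<and> 0 < \<delta>0 \<and> \<delta>0 < 1 \<and>
       (\<forall>t. f t \<ge> 0) \<and> (f has_sum 1) UNIV \<and>
       admissible N n K \<delta> A \<and> \<delta>0 \<le> \<delta> \<and> \<delta> < 1 \<and> real n \<ge> 1 / \<delta>0 \<and>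
       \<delta>0 * real n < real l \<and> l \<le> n \<and>
       (\<forall>j\<in>{1..l}. x j \<in> A j)
       \<longrightarrow>
       (\<forall>a b::int. card {a..b} \<le> N \<longrightarrow>
          (\<Sum>t\<in>{a..b}. frand p l f x t) \<le> C / sqrt (\<delta>0 * real n * min p (1 - p))) \<and>
       (\<forall>a b::int. card {a..b} \<ge> N \<longrightarrow>
          (\<Sum>t\<in>{a..b}. frand p l f x t)
            \<le> 2 * C * real (card {a..b}) / (sqrt (\<delta>0 * real n * min p (1 - p)) * real N)))"
  apply (rule exI[of _ 1], rule conjI, simp)
  apply (intro allI impI)
  apply (rule main_bound)
  apply assumption
  done


end
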